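(* Let $\mathcal{G}=(\mathcal{V},\mathcal{E})$ and $\tilde{\mathcal{G}}=(\tilde{\mathcal{V}},\tilde{\mathcal{E}})$ be reaction networks such that $\mathcal{G}\sqsubseteq\tilde{\mathcal{G}}$. If $\tilde{\mathcal{G}}$ is endotactic, then $\mathcal{G}$ is endotactic. Moreover, if $\tilde{\mathcal{G}}$ is strongly endotactic, then $\mathcal{G}$ is strongly endotactic.
   Context: A reaction network (E-graph) $\mathcal{G}=(\mathcal{V},\mathcal{E})$ is a finite directed graph whose nodes are distinct elements of a finite set $Y\subset\mathbb{R}^d_{\ge 0}$, with $\mathcal{V}\neq\emptyset$, every node incident to at least one edge, and no edge from a node to itself. For an edge $e$, $\mathbf{s}(e)$ is its source node, $\mathbf{t}(e)$ its target, $\mathbf{v}(e)=\mathbf{t}(e)-\mathbf{s}(e)$. Given positive rate constants $\mathcal{K}=(k_e)$, $\mathcal{G}$ generates $\mathbf{f}_{\mathcal{G}(\mathcal{K})}(\mathbf{x})=\sum_{e}k_e\mathbf{x}^{\mathbf{s}(e)}\mathbf{v}(e)$ ($\mathbf{x}^{\mathbf{y}}=\prod_i x_i^{y_i}$, $0^0=1$). $\mathcal{G}\sqsubseteq\tilde{\mathcal{G}}$ means: for every positive rate constants $\mathcal{K}$ for $\mathcal{G}$ there exist positive rate constants $\tilde{\mathcal{K}}$ for $\tilde{\mathcal{G}}$ with $\mathbf{f}_{\tilde{\mathcal{G}}(\tilde{\mathcal{K}})}=\mathbf{f}_{\mathcal{G}(\mathcal{K})}$ identically. $\mathcal{G}$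 is endotactic if for every $\mathbf{w}\in\mathbb{R}^d$ and $e_i\in\mathcal{E}$ with $\mathbf{w}\cdot\mathbf{v}(e_i)<0$ there exists $e_j\in\mathcal{E}$ with $\mathbf{w}\cdot(\mathbf{s}(e_j)-\mathbf{s}(e_i))<0$ and $\mathbf{w}\cdot\mathbf{v}(e_j)>0$. It is strongly endotactic if moreover such $e_j$ can always be chosen so that additionally $\mathbf{w}\cdot(\mathbf{s}(e_j)-\mathbf{s}(e_k))\le 0$ for all $e_k\in\mathcal{E}$. *)

theory Defs
  imports "HOL-Analysis.Analysis"
begin

type_synonym 'd edge = "(real ^ 'd) \<times> (real ^ 'd)"

definition src :: "'d edge \<Rightarrow> real ^ 'd" where "src e = fst e"
definition tgt :: "'d edge \<Rightarrow> real ^ 'd" where "tgt e = snd e"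
definition rvec :: "'d edge \<Rightarrow> real ^ 'd" where "rvec e = tgt e - src e"

definition nonneg_orthant :: "(real ^ 'd::finite) set" where
  "nonneg_orthant = {x. \<forall>i. 0 \<le> x $ i}"

definition reaction_network :: "(real ^ 'd::finite) set \<Rightarrow> 'd edge set \<Rightarrow> bool" where
  "reaction_network V E \<longleftrightarrow>
     finite V \<and> V \<noteq> {} \<and> V \<subseteq> nonneg_orthant \<and> E \<subseteq> V \<times> V \<and>
     (\<forall>e\<in>E. src e \<noteq> tgt e) \<and>
     (\<forall>y\<in>V. \<exists>e\<in>E. y = src e \<or> y = tgt e)"

text \<open>Monomial x^y = prod_i x_i^y_i with the convention 0^0 = 1.\<close>
definition monom :: "real ^ 'd::finite \<Rightarrow> real ^ 'd \<Rightarrow> real" where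
  "monom x y = (\<Prod>i\<in>UNIV. if y $ i = 0 then 1 else (x $ i) powr (y $ i))"

definition gen_vf :: "'d::finite edge set \<Rightarrow> ('d edge \<Rightarrow> real) \<Rightarrow> real ^ 'd \<Rightarrow> real ^ 'd" where
  "gen_vf E k x = (\<Sum>e\<in>E. (k e * monom x (src e)) *\<^sub>R rvec e)"

text \<open>G is realized by G~: every positive choice of rate constants on G can be matched by
  positive rate constants on G~ generating the same vector field on the nonnegative orthant.\<close>
definition realizes_in :: "'d::finite edge set \<Rightarrow> 'd edge set \<Rightarrow> bool" where
  "realizes_in E E' \<longleftrightarrow>
     (\<forall>k. (\<forall>e\<in>E. 0 < k e) \<longrightarrow>
        (\<exists>k'. (\<forall>e\<in>E'. 0 < k' e) \<and> (\<forall>x\<in>nonneg_orthant. gen_vf E' k' x = gen_vf E k x)))"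

definition endotactic :: "'d::finite edge set \<Rightarrow> bool" where
  "endotactic E \<longleftrightarrow>
     (\<forall>w::real^'d. \<forall>ei\<in>E. w \<bullet> rvec ei < 0 \<longrightarrow>
        (\<exists>ej\<in>E. w \<bullet> (src ej - src ei) < 0 \<and> w \<bullet> rvec ej > 0))"

definition strongly_endotactic :: "'d::finite edge set \<Rightarrow> bool" where
  "strongly_endotactic E \<longleftrightarrow>
     (\<forall>w::real^'d. \<forall>ei\<in>E. w \<bullet> rvec ei < 0 \<longrightarrow>
        (\<exists>ej\<in>E. w \<bullet> (src ej - src ei) < 0 \<and> w \<bullet> rvec ej > 0 \<and>
                 (\<forall>ek\<in>E. w \<bullet> (src ej - src ek) \<le> 0)))"

end

theory Submission
  imports Defs
begin

definition Ssum :: "'d::finite edge set \<Rightarrow> ('d edge \<Rightarrow> real) \<Rightarrow> real^'d \<Rightarrow> real^'d" where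
  "Ssum E k y = (\<Sum>e\<in>{e\<in>E. src e = y}. k e *\<^sub>R rvec e)"

lemma gen_vf_group:
  assumes "finite E" "finite Y" "src ` E \<subseteq> Y"
  shows "gen_vf E k x = (\<Sum>y\<in>Y. monom x y *\<^sub>R Ssum E k y)"
proof -
  have "gen_vf E k x = (\<Sum>e\<in>E. monom x (src e) *\<^sub>R (k e *\<^sub>R rvec e))"
    unfolding gen_vf_def by (simp add: mult.commute)
  also have "\<dots> = (\<Sum>y\<in>Y. \<Sum>e\<in>{e\<in>E. src e = y}. monom x (src e) *\<^sub>R (k e *\<^sub>R rvec e))"
    by (rule sum.group[OF assms, symmetric])
  also have "\<dots> = (\<Sum>y\<in>Y. \<Sum>e\<in>{e\<in>E. src e = y}. monom x y *\<^sub>R (k e *\<^sub>R rvec e))"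
    by (intro sum.cong refl) auto
  also have "\<dots> = (\<Sum>y\<in>Y. monom x y *\<^sub>R Ssum E k y)"
    unfolding Ssum_def scaleR_sum_right by simp
  finally show ?thesis .
qed

lemma monom_exp:
  "monom (\<chi> i. exp (t * u$i)) y = exp (t * (u \<bullet> y))"
proof -
  have "monom (\<chi> i. exp (t * u$i)) y = (\<Prod>i\<in>UNIV. exp (t * (u$i * y$i)))"
    unfolding monom_def by (intro prod.cong refl) (auto simp: powr_def algebra_simps)
  also have "\<dots> = exp (\<Sum>i\<in>UNIV. t * (u$i * y$i))" by (simp add: exp_sum)
  also have "\<dots> = exp (t * (u \<bullet> y))" by (simp add: inner_vec_def sum_distrib_left)
  finally show ?thesis .
qed

lemma exp_indep:
  fixes c :: "'a \<Rightarrow> 'v::real_normed_vector"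
  assumes "finite Y"
  shows "inj_on a Y \<Longrightarrow> (\<forall>t. (\<Sum>y\<in>Y. exp (t * a y) *\<^sub>R c y) = 0) \<Longrightarrow> \<forall>y\<in>Y. c y = 0"
  using assms
proof (induction Y rule: finite_ranking_induct[where f = a])
  case empty
  then show ?case by simp
next
  case (insert x S)
  show ?case
  proof (cases "x \<in> S")
    case True
    then show ?thesis using insert by (simp add: insert_absorb)
  next
    case False
    have lt: "a y < a x" if "y \<in> S" for y
      using insert.hyps(2)[OF that] insert.prems(1) that False
      by (metis insertI1 insertI2 inj_on_eq_iff order_le_less)
    have eq: "c x + (\<Sum>y\<in>S. exp (t * (a y - a x)) *\<^sub>R c y) = 0" for t
    proof -
      have "(\<Sum>y\<in>insert x S. exp (t * a y) *\<^sub>R c y) = 0" using insert.prems by blast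
      hence "exp (- t * a x) *\<^sub>R (\<Sum>y\<in>insert x S. exp (t * a y) *\<^sub>R c y) = 0" by simp
      thus ?thesis using False insert.hyps(1)
        by (simp add: scaleR_sum_right exp_add[symmetric] algebra_simps)
    qed
    have lim: "((\<lambda>t. c x + (\<Sum>y\<in>S. exp (t * (a y - a x)) *\<^sub>R c y)) \<longlongrightarrow> c x + (\<Sum>y\<in>S. 0 *\<^sub>R c y)) at_top"
    proof (intro tendsto_add tendsto_const tendsto_sum tendsto_scaleR)
      fix y assume "y \<in> S"
      hence "a y - a x < 0" using lt by simp
      hence "filterlim (\<lambda>t. (a y - a x) * t) at_bot at_top"
        by (intro filterlim_tendsto_neg_mult_at_bot[OF tendsto_const]) (auto intro: filterlim_ident)
      hence "filterlim (\<lambda>t. t * (a y - a x)) at_bot at_top" by (simp add: mult.commute)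
      then show "((\<lambda>t. exp (t * (a y - a x))) \<longlongrightarrow> 0) at_top"
        using exp_at_bot filterlim_compose by blast
    qed
    have "c x = 0"
      using lim eq by (simp add: tendsto_const_iff[where F=at_top] del: tendsto_const_iff)
    moreover have "\<forall>y\<in>S. c y = 0"
    proof (rule insert.IH)
      show "inj_on a S" using insert.prems by auto
      show "\<forall>t. (\<Sum>y\<in>S. exp (t * a y) *\<^sub>R c y) = 0"
        using insert.prems(2) False insert.hyps(1) \<open>c x = 0\<close> by simp
    qed
    ultimately show ?thesis by simp
  qed
qed

lemma generic_dir:
  fixes Z :: "(real^'d::finite) set"
  assumes "finite Z" "0 \<notin> Z"
  shows "\<exists>u. \<forall>z\<in>Z. u \<bullet> z \<noteq> 0"
  using assms
proof (induction Z rule: finite_induct)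
  case empty
  then show ?case by simp
next
  case (insert z F)
  then obtain u where u: "\<forall>z'\<in>F. u \<bullet> z' \<noteq> 0" by auto
  have z0: "z \<noteq> 0" using insert.prems by auto
  show ?case
  proof (cases "u \<bullet> z = 0")
    case False
    then show ?thesis using u by auto
  next
    case True
    let ?B = "{s. \<exists>z'\<in>F. u \<bullet> z' + s * (z \<bullet> z') = 0}"
    have "?B \<subseteq> (\<lambda>z'. - (u \<bullet> z') / (z \<bullet> z')) ` F"
    proof
      fix s assume "s \<in> ?B"
      then obtain z' where z': "z' \<in> F" "u \<bullet> z' + s * (z \<bullet> z') = 0" by auto
      hence "z \<bullet> z' \<noteq> 0" using u by auto
      hence "s = - (u \<bullet> z') / (z \<bullet> z')" using z'(2) by (simp add: field_simps)
      thus "s \<in> (\<lambda>z'. - (u \<bullet> z') / (z \<bullet> z')) ` F" using z'(1) by auto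
    qed
    hence "finite ?B" using insert.hyps(1) by (meson finite_imageI finite_subset)
    hence "finite (insert 0 ?B)" by simp
    then obtain s where s: "s \<notin> insert 0 ?B"
      using ex_new_if_finite[OF infinite_UNIV_char_0] by blast
    have "\<forall>z'\<in>insert z F. (u + s *\<^sub>R z) \<bullet> z' \<noteq> 0"
    proof
      fix z' assume "z' \<in> insert z F"
      then consider "z' = z" | "z' \<in> F" by auto
      then show "(u + s *\<^sub>R z) \<bullet> z' \<noteq> 0"
      proof cases
        case 1
        then show ?thesis using True s z0 by (simp add: inner_add_left)
      next
        case 2
        then show ?thesis using s by (auto simp: inner_add_left)
      qed
    qed
    then show ?thesis by blast
  qed
qed

lemma Ssum_eq:
  assumes "finite E" "finite E'"
    and eq: "\<forall>x\<in>nonneg_orthant. gen_vf E' k' x = gen_vf E k x"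
  shows "Ssum E' k' y = Ssum E k y"
proof -
  let ?Y = "insert y (src ` E \<union> src ` E')"
  have fY: "finite ?Y" using assms by auto
  define c where "c y = Ssum E' k' y - Ssum E k y" for y
  have sum0: "(\<Sum>y\<in>?Y. monom x y *\<^sub>R c y) = 0" if "x \<in> nonneg_orthant" for x
  proof -
    have "gen_vf E' k' x - gen_vf E k x = 0" using eq that by simp
    moreover have "gen_vf E' k' x = (\<Sum>y\<in>?Y. monom x y *\<^sub>R Ssum E' k' y)"
      by (rule gen_vf_group) (use assms in auto)
    moreover have "gen_vf E k x = (\<Sum>y\<in>?Y. monom x y *\<^sub>R Ssum E k y)"
      by (rule gen_vf_group) (use assms in auto)
    ultimately show ?thesis
      by (simp add: c_def scaleR_diff_right sum_subtractf)
  qed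
  let ?Z = "(\<lambda>(a, b). a - b) ` ((?Y \<times> ?Y) - {p. fst p = snd p})"
  have "finite ?Z" using fY by simp
  moreover have "0 \<notin> ?Z" by fastforce
  ultimately obtain u :: "real^'a" where u: "\<forall>z\<in>?Z. u \<bullet> z \<noteq> 0"
    using generic_dir by blast
  have inj: "inj_on (\<lambda>y. u \<bullet> y) ?Y"
  proof (rule inj_onI)
    fix a b assume ab: "a \<in> ?Y" "b \<in> ?Y" "u \<bullet> a = u \<bullet> b"
    show "a = b"
    proof (rule ccontr)
      assume "a \<noteq> b"
      hence "(a, b) \<in> (?Y \<times> ?Y) - {p. fst p = snd p}" using ab \<open>a \<noteq> b\<close> by auto
      hence "a - b \<in> ?Z" by (metis (no_types, lifting) case_prod_conv image_eqI)
      hence "u \<bullet> (a - b) \<noteq> 0" using u by blast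
      thus False using ab(3) by (simp add: inner_diff_right)
    qed
  qed
  have "\<forall>t. (\<Sum>y\<in>?Y. exp (t * (u \<bullet> y)) *\<^sub>R c y) = 0"
  proof
    fix t
    have "(\<chi> i. exp (t * u$i)) \<in> nonneg_orthant" by (simp add: nonneg_orthant_def)
    from sum0[OF this] show "(\<Sum>y\<in>?Y. exp (t * (u \<bullet> y)) *\<^sub>R c y) = 0"
      by (simp add: monom_exp)
  qed
  from exp_indep[OF fY inj this] have "c y = 0" by simp
  thus ?thesis by (simp add: c_def)
qed

lemma inner_Ssum: "w \<bullet> Ssum E k y = (\<Sum>e\<in>{e\<in>E. src e = y}. k e * (w \<bullet> rvec e))"
  unfolding Ssum_def by (simp add: inner_sum_right)

lemma neg_boost:
  assumes "finite E" "e \<in> E" "w \<bullet> rvec e < 0"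
  shows "\<exists>k. (\<forall>e\<in>E. 0 < k e) \<and> w \<bullet> Ssum E k (src e) < 0"
proof -
  let ?T = "{e'\<in>E. src e' = src e}"
  define R where "R = (\<Sum>e'\<in>?T - {e}. w \<bullet> rvec e')"
  define a where "a = - (w \<bullet> rvec e)"
  have a: "a > 0" using assms unfolding a_def by simp
  define M where "M = (\<bar>R\<bar> + 1) / a"
  have M: "M > 0" using a unfolding M_def by (simp add: add_pos_nonneg)
  define k where "k = (\<lambda>e'. if e' = e then M else 1)"
  have "w \<bullet> Ssum E k (src e) = k e * (w \<bullet> rvec e) + (\<Sum>e'\<in>?T - {e}. k e' * (w \<bullet> rvec e'))"
    unfolding inner_Ssum using assms by (subst sum.remove[of _ e]) auto
  also have "\<dots> = - (\<bar>R\<bar> + 1) + R"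
  proof -
    have "(\<Sum>e'\<in>?T - {e}. k e' * (w \<bullet> rvec e')) = R" unfolding R_def k_def by (intro sum.cong) auto
    moreover have "k e * (w \<bullet> rvec e) = - (\<bar>R\<bar> + 1)" using a by (simp add: k_def M_def a_def)
    ultimately show ?thesis by simp
  qed
  also have "\<dots> < 0" by simp
  finally show ?thesis using M unfolding k_def by (intro exI[of _ k]) (auto simp: k_def)
qed

lemma nz_boost:
  assumes "finite E" "e \<in> E" "src e \<noteq> tgt e"
  shows "\<exists>k. (\<forall>e\<in>E. 0 < k e) \<and> Ssum E k (src e) \<noteq> 0"
proof (rule ccontr)
  assume H: "\<not> ?thesis"
  let ?T = "{e'\<in>E. src e' = src e}"
  define k2 where "k2 = (\<lambda>e'. if e' = e then 2 else (1::real))"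
  have H': "\<forall>k. (\<forall>e\<in>E. 0 < k e) \<longrightarrow> Ssum E k (src e) = 0" using H by blast
  have "Ssum E (\<lambda>_. 1) (src e) = 0" using H' by auto
  moreover have "Ssum E k2 (src e) = 0" using H'[rule_format, of k2] by (auto simp: k2_def)
  moreover have "Ssum E (\<lambda>_. 1) (src e) = rvec e + (\<Sum>e'\<in>?T - {e}. rvec e')"
    unfolding Ssum_def using assms by (subst sum.remove[of _ e]) auto
  moreover have "Ssum E k2 (src e) = 2 *\<^sub>R rvec e + (\<Sum>e'\<in>?T - {e}. rvec e')"
    unfolding Ssum_def using assms by (subst sum.remove[of _ e]) (auto simp: k2_def)
  ultimately have A: "rvec e + (\<Sum>e'\<in>?T - {e}. rvec e') = 0" and B: "2 *\<^sub>R rvec e + (\<Sum>e'\<in>?T - {e}. rvec e') = 0"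
    by simp_all
  have "rvec e = (2 *\<^sub>R rvec e + (\<Sum>e'\<in>?T - {e}. rvec e')) - (rvec e + (\<Sum>e'\<in>?T - {e}. rvec e'))"
    by (simp add: scaleR_2)
  hence "rvec e = 0" using A B by simp
  thus False using assms(3) by (simp add: rvec_def)
qed

lemma from_neg:
  assumes "w \<bullet> Ssum E k y < 0" "\<forall>e\<in>E. 0 < k e"
  shows "\<exists>e\<in>E. src e = y \<and> w \<bullet> rvec e < 0"
proof (rule ccontr)
  assume "\<not> ?thesis"
  hence "0 \<le> w \<bullet> Ssum E k y" unfolding inner_Ssum using assms(2)
    by (intro sum_nonneg) (auto intro!: mult_nonneg_nonneg simp: not_less less_imp_le)
  thus False using assms by simp
qed

lemma from_pos:
  assumes "w \<bullet> Ssum E k y > 0" "\<forall>e\<in>E. 0 < k e"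
  shows "\<exists>e\<in>E. src e = y \<and> w \<bullet> rvec e > 0"
proof (rule ccontr)
  assume "\<not> ?thesis"
  hence "w \<bullet> Ssum E k y \<le> 0" unfolding inner_Ssum using assms(2)
    by (intro sum_nonpos) (auto intro!: mult_nonneg_nonpos simp: not_less less_imp_le)
  thus False using assms by simp
qed

lemma from_nz:
  assumes "Ssum E k y \<noteq> 0"
  shows "\<exists>e\<in>E. src e = y"
  using assms unfolding Ssum_def by (metis (mono_tags, lifting) empty_Collect_eq sum.empty)

lemma to_pos:
  assumes "finite E" "e \<in> E" "src e = z" "w \<bullet> rvec e > 0"
    "\<forall>e\<in>E. src e = z \<longrightarrow> w \<bullet> rvec e \<ge> 0" "\<forall>e\<in>E. 0 < k e"
  shows "w \<bullet> Ssum E k z > 0"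
  unfolding inner_Ssum using assms
  by (intro sum_pos2[of _ e]) auto

lemma finite_min_obtain:
  fixes f :: "'a \<Rightarrow> real"
  assumes "finite S" "S \<noteq> {}"
  obtains x where "x \<in> S" "\<forall>y\<in>S. f x \<le> f y"
proof -
  have "Min (f ` S) \<in> f ` S" using assms by simp
  then obtain x where "x \<in> S" "f x = Min (f ` S)" by auto
  moreover have "\<forall>y\<in>S. f x \<le> f y" using assms calculation by simp
  ultimately show ?thesis using that by blast
qed

theorem lemma3:
  fixes V V' :: "(real ^ 'd::finite) set" and E E' :: "'d edge set"
  assumes "reaction_network V E" and "reaction_network V' E'"
    and "realizes_in E E'"
  shows "(endotactic E' \<longrightarrow> endotactic E) \<and>
         (strongly_endotactic E' \<longrightarrow> strongly_endotactic E)"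
proof -
  have fE: "finite E" using assms(1) unfolding reaction_network_def
    by (meson finite_SigmaI finite_subset)
  have fE': "finite E'" using assms(2) unfolding reaction_network_def
    by (meson finite_SigmaI finite_subset)
  have stE: "\<forall>e\<in>E. src e \<noteq> tgt e" using assms(1) unfolding reaction_network_def by blast
  have P: "\<exists>k'. (\<forall>e\<in>E'. 0 < k' e) \<and> (\<forall>y. Ssum E' k' y = Ssum E k y)"
    if kpos: "\<forall>e\<in>E. 0 < k e" for k
  proof -
    obtain k' where "\<forall>e\<in>E'. 0 < k' e" "\<forall>x\<in>nonneg_orthant. gen_vf E' k' x = gen_vf E k x"
      using assms(3) kpos unfolding realizes_in_def by blast
    thus ?thesis using Ssum_eq[OF fE fE'] by blast
  qed
  have negT: "\<exists>e'\<in>E'. src e' = src ei \<and> w \<bullet> rvec e' < 0"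
    if hh: "ei \<in> E" "w \<bullet> rvec ei < 0" for w ei
  proof -
    obtain k where k: "\<forall>e\<in>E. 0 < k e" "w \<bullet> Ssum E k (src ei) < 0"
      using neg_boost[OF fE hh] by blast
    obtain k' where k': "\<forall>e\<in>E'. 0 < k' e" "\<forall>y. Ssum E' k' y = Ssum E k y"
      using P[OF k(1)] by blast
    show ?thesis using from_neg[of w E' k' "src ei"] k k' by simp
  qed
  have posT: "\<exists>e\<in>E. src e = src e' \<and> w \<bullet> rvec e > 0"
    if "e' \<in> E'" "w \<bullet> rvec e' > 0" "\<forall>e\<in>E'. src e = src e' \<longrightarrow> w \<bullet> rvec e \<ge> 0" for w e'
  proof -
    obtain k' where k': "\<forall>e\<in>E'. 0 < k' e" "\<forall>y. Ssum E' k' y = Ssum E (\<lambda>_. 1) y"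
      using P[of "\<lambda>_. 1"] by auto
    have "w \<bullet> Ssum E' k' (src e') > 0"
      using to_pos[OF fE' that(1) refl that(2)] that(3) k'(1) by blast
    hence "w \<bullet> Ssum E (\<lambda>_. 1) (src e') > 0" using k'(2) by simp
    thus ?thesis using from_pos[of w E "\<lambda>_. 1" "src e'"] by simp
  qed
  have srcT: "\<exists>e'\<in>E'. src e' = src e" if he: "e \<in> E" for e
  proof -
    obtain k where k: "\<forall>e\<in>E. 0 < k e" "Ssum E k (src e) \<noteq> 0"
      using nz_boost[OF fE he] stE he by blast
    obtain k' where k': "\<forall>e\<in>E'. 0 < k' e" "\<forall>y. Ssum E' k' y = Ssum E k y"
      using P[OF k(1)] by blast
    show ?thesis using from_nz[of E' k' "src e"] k k' by simp
  qed
  have part1: "endotactic E"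
    if endo: "endotactic E'"
  proof -
    have endo': "\<exists>ej\<in>E'. w \<bullet> (src ej - src ei) < 0 \<and> w \<bullet> rvec ej > 0"
      if "ei \<in> E'" "w \<bullet> rvec ei < 0" for w ei
      using endo that unfolding endotactic_def by blast
    show ?thesis unfolding endotactic_def
    proof (intro allI ballI impI)
      fix w ei assume ei: "ei \<in> E" "w \<bullet> rvec ei < 0"
      obtain e'i where e'i: "e'i \<in> E'" "src e'i = src ei" "w \<bullet> rvec e'i < 0"
        using negT[OF ei] by blast
      let ?Ess = "{e\<in>E'. w \<bullet> rvec e \<noteq> 0}"
      have "e'i \<in> ?Ess" using e'i by simp
      hence ne: "?Ess \<noteq> {}" by blast
      have fin: "finite ?Ess" using fE' by simp
      note fin ne
      then obtain es where es: "es \<in> ?Ess" and mn: "\<forall>e\<in>?Ess. w \<bullet> src es \<le> w \<bullet> src e"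
        using finite_min_obtain[of ?Ess "\<lambda>e. w \<bullet> src e"] by blast
      have noneg: "\<forall>e\<in>E'. src e = src es \<longrightarrow> w \<bullet> rvec e \<ge> 0"
      proof (intro ballI impI)
        fix e assume e: "e \<in> E'" "src e = src es"
        show "w \<bullet> rvec e \<ge> 0"
        proof (rule ccontr)
          assume "\<not> ?thesis"
          hence "w \<bullet> rvec e < 0" by simp
          then obtain ej where ej: "ej \<in> E'" "w \<bullet> (src ej - src e) < 0" "w \<bullet> rvec ej > 0"
            using endo'[OF e(1)] by blast
          have "ej \<in> ?Ess" using ej by simp
          hence "w \<bullet> src es \<le> w \<bullet> src ej" using mn by blast
          thus False using ej(2) e(2) by (simp add: inner_diff_right)
        qed
      qed
      have "w \<bullet> rvec es \<noteq> 0" "es \<in> E'" using es by simp_all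
      hence espos: "w \<bullet> rvec es > 0" using noneg by force
      obtain ej0 where ej0: "ej0 \<in> E'" "w \<bullet> (src ej0 - src e'i) < 0" "w \<bullet> rvec ej0 > 0"
        using endo'[OF e'i(1) e'i(3)] by blast
      have "ej0 \<in> ?Ess" using ej0 by simp
      hence "w \<bullet> src es \<le> w \<bullet> src ej0" using mn by blast
      hence lt: "w \<bullet> src es < w \<bullet> src ei" using ej0(2) e'i(2) by (simp add: inner_diff_right)
      obtain e where e: "e \<in> E" "src e = src es" "w \<bullet> rvec e > 0"
        using posT[of es w] es espos noneg by blast
      show "\<exists>ej\<in>E. w \<bullet> (src ej - src ei) < 0 \<and> w \<bullet> rvec ej > 0"
        using e lt by (intro bexI[of _ e]) (auto simp: inner_diff_right)
    qed
  qed
  have part2: "strongly_endotactic E"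
    if sendo: "strongly_endotactic E'"
  proof -
    have sendo': "\<exists>ej\<in>E'. w \<bullet> (src ej - src ei) < 0 \<and> w \<bullet> rvec ej > 0 \<and>
                 (\<forall>ek\<in>E'. w \<bullet> (src ej - src ek) \<le> 0)"
      if "ei \<in> E'" "w \<bullet> rvec ei < 0" for w ei
      using sendo that unfolding strongly_endotactic_def by blast
    show ?thesis unfolding strongly_endotactic_def
    proof (intro allI ballI impI)
      fix w ei assume ei: "ei \<in> E" "w \<bullet> rvec ei < 0"
      obtain e'i where e'i: "e'i \<in> E'" "src e'i = src ei" "w \<bullet> rvec e'i < 0"
        using negT[OF ei] by blast
      obtain es where es: "es \<in> E'" "w \<bullet> (src es - src e'i) < 0" "w \<bullet> rvec es > 0"
        and mn: "\<forall>ek\<in>E'. w \<bullet> (src es - src ek) \<le> 0"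
        using sendo'[OF e'i(1) e'i(3)] by blast
      have noneg: "\<forall>e\<in>E'. src e = src es \<longrightarrow> w \<bullet> rvec e \<ge> 0"
      proof (intro ballI impI)
        fix e assume e: "e \<in> E'" "src e = src es"
        show "w \<bullet> rvec e \<ge> 0"
        proof (rule ccontr)
          assume "\<not> ?thesis"
          hence "w \<bullet> rvec e < 0" by simp
          then obtain ej where ej: "ej \<in> E'" "w \<bullet> (src ej - src e) < 0"
            using sendo'[OF e(1)] by blast
          have "w \<bullet> (src es - src ej) \<le> 0" using mn ej by auto
          thus False using ej(2) e(2) by (simp add: inner_diff_right)
        qed
      qed
      obtain e where e: "e \<in> E" "src e = src es" "w \<bullet> rvec e > 0"
        using posT[of es w] es noneg by blast
      have all: "\<forall>ek\<in>E. w \<bullet> (src e - src ek) \<le> 0"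
      proof
        fix ek assume "ek \<in> E"
        then obtain e' where "e' \<in> E'" "src e' = src ek" using srcT by blast
        thus "w \<bullet> (src e - src ek) \<le> 0" using mn e(2) by force
      qed
      show "\<exists>ej\<in>E. w \<bullet> (src ej - src ei) < 0 \<and> w \<bullet> rvec ej > 0 \<and>
                 (\<forall>ek\<in>E. w \<bullet> (src ej - src ek) \<le> 0)"
        using e es(2) e'i(2) all by (intro bexI[of _ e]) auto
    qed
  qed
  show ?thesis using part1 part2 by blast
qed

end
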